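(* Suppose $\Theta=\mathbb{R}^N$ with the Euclidean inner product and $J(\theta)=\|\theta\|_1=\sum_{i=1}^N|\theta_i|$. Under the hypotheses of the convergence-in-norm theorem (i.e., $\delta>0$; (A), (B), (C); step sizes with $\tau^{(k)}\le\frac{\mu}{2\delta L^2}$, $\tau^{(k+1)}\le\tau^{(k)}$, $\sum_k(\tau^{(k)})^2<\infty$, $\sum_k\tau^{(k)}=\infty$), with $\theta^*$ the unique minimizer of $\mathcal{L}$ and $d_k:=\mathbb{E}\big[D^{v^{(k)}}_{J_\delta}(\theta^*,\theta^{(k)})\big]$, it holds $\lim_{k\to\infty}d_k=0$, and in particular $\lim_{k\to\infty}\mathbb{E}\big[\|\theta^*-\theta^{(k)}\|^2\big]=0$.
   Context: For a convex proper functional $J$, $\partial J(\theta)$ denotes its subdifferential and, for $p\in\partial J(\theta)$, $D^p_J(\bar\theta,\theta)=J(\bar\theta)-J(\theta)-\langle p,\bar\theta-\theta\rangle$ its Bregman distance. The proximal operator is $\mathrm{prox}_F(\bar\theta)=\arg\min_\theta\frac12\|\theta-\bar\theta\|^2+F(\theta)$. For $\delta>0$, $J_\delta(\theta)=J(\theta)+\frac1{2\delta}\|\theta\|^2$. Let $(\Omega,F,\mathbb{P})$ be a probability space, $\mathcal{L}:\Theta\to\mathbb{R}$ differentiable, and $g:\Theta\times\Omega\to\Theta$ (measurable in $\omega$) with $\mathbb{E}_\omega[g(\theta;\omega)]=\nabla\mathcal{L}(\theta)$ for all $\theta$. Stochastic linearized Bregman iteration: deterministic $\theta^{(0)}$,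 $v^{(0)}\in\partial J_\delta(\theta^{(0)})$; $\omega^{(0)},\omega^{(1)},\dots$ independent with law $\mathbb{P}$; $g^{(k)}=g(\theta^{(k)};\omega^{(k)})$, $v^{(k+1)}=v^{(k)}-\tau^{(k)}g^{(k)}$, $\theta^{(k+1)}=\mathrm{prox}_{\delta J}(\delta v^{(k+1)})$; then $v^{(k)}\in\partial J_\delta(\theta^{(k)})$. All expectations appearing are assumed finite. (A): $\mathcal{L}\ge0$, continuously differentiable, $\nabla\mathcal{L}$ is $L$-Lipschitz, $L\in(0,\infty)$. (B): $\exists\sigma>0$: $\mathbb{E}_\omega\|g(\theta;\omega)-\nabla\mathcal{L}(\theta)\|^2\le\sigma^2$ for all $\theta$. (C): $\mathcal{L}(\tilde\theta)\ge\mathcal{L}(\theta)+\langle\nabla\mathcal{L}(\theta),\tilde\theta-\theta\rangle+\frac\mu2\|\tilde\theta-\theta\|^2$ for all $\theta,\tilde\theta$, with $\mu\in(0,\infty)$. *)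

theory Defs
  imports "HOL-Probability.Probability"
begin

definition subdiff :: "('a::real_inner \<Rightarrow> real) \<Rightarrow> 'a \<Rightarrow> 'a set" where
  "subdiff J \<theta> = {p. \<forall>y. J y \<ge> J \<theta> + p \<bullet> (y - \<theta>)}"

definition bregman :: "('a::real_inner \<Rightarrow> real) \<Rightarrow> 'a \<Rightarrow> 'a \<Rightarrow> 'a \<Rightarrow> real" where
  "bregman J p a b = J a - J b - p \<bullet> (a - b)"

definition prox :: "('a::real_inner \<Rightarrow> real) \<Rightarrow> 'a \<Rightarrow> 'a" where
  "prox F z = (THE \<theta>. \<forall>\<theta>'. (1/2) * (norm (\<theta> - z))\<^sup>2 + F \<theta> \<le> (1/2) * (norm (\<theta>' - z))\<^sup>2 + F \<theta>')"

definition Jdelta :: "('a::real_inner \<Rightarrow> real) \<Rightarrow> real \<Rightarrow> 'a \<Rightarrow> real" where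
  "Jdelta J \<delta> \<theta> = J \<theta> + (norm \<theta>)\<^sup>2 / (2 * \<delta>)"

definition l1norm :: "real ^ 'n \<Rightarrow> real" where
  "l1norm x = (\<Sum>i\<in>UNIV. \<bar>x $ i\<bar>)"

text \<open>Stochastic linearized Bregman iteration along a realisation ws of the samples
  omega^(0), omega^(1), ...; returns (theta^(k), v^(k)).\<close>
fun slbi :: "('a::real_inner \<Rightarrow> real) \<Rightarrow> real \<Rightarrow> ('a \<Rightarrow> 'w \<Rightarrow> 'a) \<Rightarrow> (nat \<Rightarrow> real)
              \<Rightarrow> 'a \<Rightarrow> 'a \<Rightarrow> (nat \<Rightarrow> 'w) \<Rightarrow> nat \<Rightarrow> 'a \<times> 'a" where
  "slbi J \<delta> g \<tau> \<theta>0 v0 ws 0 = (\<theta>0, v0)"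
| "slbi J \<delta> g \<tau> \<theta>0 v0 ws (Suc k) =
     (let \<theta> = fst (slbi J \<delta> g \<tau> \<theta>0 v0 ws k);
          v = snd (slbi J \<delta> g \<tau> \<theta>0 v0 ws k);
          v' = v - \<tau> k *\<^sub>R g \<theta> (ws k)
      in (prox (\<lambda>x. \<delta> * J x) (\<delta> *\<^sub>R v'), v'))"

end

theory Submission
  imports Defs
begin

lemma indep_integral:
  fixes X Y :: "'s \<Rightarrow> 'x" and f :: "'x \<times> 'x \<Rightarrow> real"
  assumes pP: "prob_space P"
    and X: "X \<in> measurable P N" and Y: "Y \<in> measurable P K"
    and ind: "prob_space.indep_var P N X K Y"
    and f: "f \<in> borel_measurable (N \<Otimes>\<^sub>M K)"
    and int: "integrable P (\<lambda>s. f (X s, Y s))"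
  shows "integrable P (\<lambda>s. \<integral>w. f (X s, w) \<partial>(distr P K Y))
     \<and> (\<integral>s. f (X s, Y s) \<partial>P) = (\<integral>s. (\<integral>w. f (X s, w) \<partial>(distr P K Y)) \<partial>P)"
proof -
  interpret P: prob_space P by (rule pP)
  let ?D = "distr P N X" and ?M = "distr P K Y"
  interpret D: prob_space ?D by (rule P.prob_space_distr[OF X])
  interpret M: prob_space ?M by (rule P.prob_space_distr[OF Y])
  interpret DM: pair_sigma_finite ?D ?M
    by (simp add: D.sigma_finite_measure_axioms M.sigma_finite_measure_axioms pair_sigma_finite_def)
  have eq: "?D \<Otimes>\<^sub>M ?M = distr P (N \<Otimes>\<^sub>M K) (\<lambda>s. (X s, Y s))"
    using ind by (simp add: P.indep_var_distribution_eq)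
  have XY: "(\<lambda>s. (X s, Y s)) \<in> measurable P (N \<Otimes>\<^sub>M K)"
    using X Y by (rule measurable_Pair)
  have i1: "integrable (?D \<Otimes>\<^sub>M ?M) f"
    unfolding eq using integrable_distr_eq[OF XY f] int by simp
  have f2: "f \<in> borel_measurable (N \<Otimes>\<^sub>M ?M)"
    using f by (simp add: sets_pair_measure_cong)
  have h: "(\<lambda>x. \<integral>w. f (x, w) \<partial>?M) \<in> borel_measurable N"
    using M.borel_measurable_lebesgue_integral[of "\<lambda>x w. f (x, w)" N] f2 by simp
  have i2: "integrable ?D (\<lambda>x. \<integral>w. f (x, w) \<partial>?M)"
    by (rule DM.integrable_fst'[OF i1])
  have 1: "integrable P (\<lambda>s. \<integral>w. f (X s, w) \<partial>?M)"
    using i2 integrable_distr_eq[OF X h] by simp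
  have "(\<integral>s. f (X s, Y s) \<partial>P) = integral\<^sup>L (distr P (N \<Otimes>\<^sub>M K) (\<lambda>s. (X s, Y s))) f"
    by (rule integral_distr[OF XY f, symmetric])
  also have "\<dots> = (\<integral>x. (\<integral>w. f (x, w) \<partial>?M) \<partial>?D)"
    using DM.integral_fst'[OF i1] eq by simp
  also have "\<dots> = (\<integral>s. (\<integral>w. f (X s, w) \<partial>?M) \<partial>P)"
    by (rule integral_distr[OF X h])
  finally show ?thesis using 1 by simp
qed

lemma indep_step:
  fixes \<omega> :: "nat \<Rightarrow> 's \<Rightarrow> 'w" and h :: "'a \<times> 'w \<Rightarrow> real"
  assumes pP: "prob_space P"
    and indep: "prob_space.indep_vars P (\<lambda>_. M) \<omega> UNIV"
    and law: "distr P M (\<omega> k) = M"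
    and F: "F \<in> measurable (PiM {..<k} (\<lambda>_. M)) N"
    and h: "h \<in> borel_measurable (N \<Otimes>\<^sub>M M)"
    and int: "integrable P (\<lambda>s. h (F (restrict (\<lambda>i. \<omega> i s) {..<k}), \<omega> k s))"
  shows "integrable P (\<lambda>s. \<integral>w. h (F (restrict (\<lambda>i. \<omega> i s) {..<k}), w) \<partial>M)
     \<and> (\<integral>s. h (F (restrict (\<lambda>i. \<omega> i s) {..<k}), \<omega> k s) \<partial>P)
       = (\<integral>s. (\<integral>w. h (F (restrict (\<lambda>i. \<omega> i s) {..<k}), w) \<partial>M) \<partial>P)"
proof -
  interpret P: prob_space P by (rule pP)
  have rv: "\<And>i. \<omega> i \<in> measurable P M"
    using indep unfolding P.indep_vars_def by auto
  let ?A = "PiM {..<k} (\<lambda>_. M)" and ?B = "PiM {k} (\<lambda>_. M)"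
  let ?X = "\<lambda>s. restrict (\<lambda>i. \<omega> i s) {..<k}" and ?Y = "\<lambda>s. restrict (\<lambda>i. \<omega> i s) {k}"
  have ind: "P.indep_var ?A ?X ?B ?Y"
    by (rule P.indep_var_restrict[OF indep]) auto
  have X: "?X \<in> measurable P ?A" by (rule measurable_restrict) (simp add: rv)
  have Y: "?Y \<in> measurable P ?B" by (rule measurable_restrict) (simp add: rv)
  define f where "f = (\<lambda>(a, b). h (F a, b k))"
  have ev: "(\<lambda>b. b k) \<in> measurable ?B M"
    by (rule measurable_component_singleton) simp
  have f: "f \<in> borel_measurable (?A \<Otimes>\<^sub>M ?B)"
  proof -
    have "(\<lambda>p. (F (fst p), snd p k)) \<in> measurable (?A \<Otimes>\<^sub>M ?B) (N \<Otimes>\<^sub>M M)"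
      apply (rule measurable_Pair)
       apply (rule measurable_compose[OF measurable_fst F])
      apply (rule measurable_compose[OF measurable_snd ev])
      done
    then have "(\<lambda>p. h (F (fst p), snd p k)) \<in> borel_measurable (?A \<Otimes>\<^sub>M ?B)"
      using h by (rule measurable_compose)
    then show ?thesis unfolding f_def by (simp add: case_prod_beta)
  qed
  have int': "integrable P (\<lambda>s. f (?X s, ?Y s))" using int by (simp add: f_def)
  from indep_integral[OF pP X Y ind f int']
  have R: "integrable P (\<lambda>s. \<integral>w. f (?X s, w) \<partial>(distr P ?B ?Y))
     \<and> (\<integral>s. f (?X s, ?Y s) \<partial>P) = (\<integral>s. (\<integral>w. f (?X s, w) \<partial>(distr P ?B ?Y)) \<partial>P)" .
  have inner: "(\<integral>w. f (a, w) \<partial>(distr P ?B ?Y)) = (\<integral>w. h (F a, w) \<partial>M)" if a: "a \<in> space ?A" for a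
  proof -
    have Fa: "F a \<in> space N" using F a by (rule measurable_space)
    have "(\<lambda>w. (F a, w)) \<in> measurable M (N \<Otimes>\<^sub>M M)"
      using measurable_Pair[OF measurable_const[OF Fa] measurable_ident, of M] by (simp add: id_def)
    then have hm: "(\<lambda>w. h (F a, w)) \<in> borel_measurable M"
      using h by (rule measurable_compose)
    have fm: "(\<lambda>b. f (a, b)) \<in> borel_measurable ?B"
      unfolding f_def using measurable_compose[OF ev hm] by simp
    have "(\<integral>w. f (a, w) \<partial>(distr P ?B ?Y)) = (\<integral>s. f (a, ?Y s) \<partial>P)"
      by (rule integral_distr[OF Y fm])
    also have "\<dots> = (\<integral>s. h (F a, \<omega> k s) \<partial>P)" by (simp add: f_def)
    also have "\<dots> = (\<integral>w. h (F a, w) \<partial>(distr P M (\<omega> k)))"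
      by (rule integral_distr[OF rv hm, symmetric])
    finally show ?thesis using law by simp
  qed
  have eqs: "(\<integral>w. f (?X s, w) \<partial>(distr P ?B ?Y)) = (\<integral>w. h (F (?X s), w) \<partial>M)"
    if "s \<in> space P" for s
    using inner[OF measurable_space[OF X that]] .
  have e1: "(\<integral>s. (\<integral>w. f (?X s, w) \<partial>(distr P ?B ?Y)) \<partial>P) = (\<integral>s. (\<integral>w. h (F (?X s), w) \<partial>M) \<partial>P)"
    by (rule Bochner_Integration.integral_cong[OF refl eqs])
  have e2: "integrable P (\<lambda>s. \<integral>w. f (?X s, w) \<partial>(distr P ?B ?Y)) = integrable P (\<lambda>s. \<integral>w. h (F (?X s), w) \<partial>M)"
    by (rule Bochner_Integration.integrable_cong[OF refl eqs])
  show ?thesis using R e1 e2 by (simp add: f_def)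
qed

definition clamp :: "real \<Rightarrow> real ^ 'n \<Rightarrow> real ^ 'n" where
  "clamp d z = (\<chi> i. max (-d) (min d (z $ i)))"
definition soft :: "real \<Rightarrow> real ^ 'n \<Rightarrow> real ^ 'n" where
  "soft d z = z - clamp d z"
definition sg :: "real ^ 'n \<Rightarrow> real ^ 'n \<Rightarrow> bool" where
  "sg p x \<longleftrightarrow> (\<forall>i. \<bar>p $ i\<bar> \<le> 1 \<and> p $ i * x $ i = \<bar>x $ i\<bar>)"

lemma sg_l1:
  assumes "sg p x" shows "l1norm y \<ge> l1norm x + p \<bullet> (y - x)"
proof -
  have a: "p \<bullet> x = l1norm x" using assms
    by (simp add: sg_def inner_vec_def l1norm_def)
  have "p \<bullet> y \<le> l1norm y" unfolding inner_vec_def l1norm_def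
  proof (rule sum_mono)
    fix i
    have "\<bar>p $ i\<bar> \<le> 1" using assms by (simp add: sg_def)
    then have "\<bar>p $ i * y $ i\<bar> \<le> \<bar>y $ i\<bar>"
      by (simp add: abs_mult mult_left_le_one_le)
    then show "p $ i \<bullet> y $ i \<le> \<bar>y $ i\<bar>" by simp
  qed
  then show ?thesis using a by (simp add: inner_diff_right)
qed

lemma norm_add_sq:
  fixes a b :: "'a::real_inner"
  shows "(norm (a + b))\<^sup>2 = (norm a)\<^sup>2 + 2 * (a \<bullet> b) + (norm b)\<^sup>2"
  by (simp add: power2_norm_eq_inner inner_add_left inner_add_right inner_commute)

lemma norm_sq_expand:
  fixes x y :: "'a::real_inner"
  shows "(norm y)\<^sup>2 = (norm x)\<^sup>2 + 2 * (x \<bullet> (y - x)) + (norm (y - x))\<^sup>2"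
proof -
  have "y = x + (y - x)" by simp
  then have "(norm y)\<^sup>2 = (norm (x + (y - x)))\<^sup>2" by (rule arg_cong)
  also have "\<dots> = (norm x)\<^sup>2 + 2 * (x \<bullet> (y - x)) + (norm (y - x))\<^sup>2"
    by (rule norm_add_sq)
  finally show ?thesis .
qed

lemma sg_Jdelta:
  assumes "sg p x" "d > 0"
  shows "Jdelta l1norm d y \<ge> Jdelta l1norm d x + (p + inverse d *\<^sub>R x) \<bullet> (y - x) + (norm (y - x))\<^sup>2 / (2 * d)"
proof -
  have 1: "l1norm y \<ge> l1norm x + p \<bullet> (y - x)" by (rule sg_l1[OF assms(1)])
  have 2: "(norm y)\<^sup>2 / (2 * d) = (norm x)\<^sup>2 / (2*d) + (inverse d *\<^sub>R x) \<bullet> (y - x) + (norm (y - x))\<^sup>2 / (2 * d)"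
    using assms(2) by (subst norm_sq_expand[of y x]) (simp add: field_simps)
  show ?thesis using 1 2 unfolding Jdelta_def by (simp add: inner_add_left)
qed

lemma sg_clamp:
  assumes "d > 0" shows "sg (inverse d *\<^sub>R clamp d z) (soft d z)"
  unfolding sg_def
proof
  fix i
  let ?c = "max (-d) (min d (z $ i))"
  have c: "(clamp d z) $ i = ?c" by (simp add: clamp_def)
  have s: "(soft d z) $ i = z $ i - ?c" by (simp add: soft_def c)
  have "\<bar>?c / d\<bar> \<le> 1 \<and> ?c / d * (z $ i - ?c) = \<bar>z $ i - ?c\<bar>"
  proof (cases "z $ i \<ge> d")
    case True then show ?thesis using assms by simp
  next
    case F1: False show ?thesis
    proof (cases "z $ i \<le> -d")
      case True then show ?thesis using assms F1 by simp
    next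
      case False then show ?thesis using assms F1 by (simp add: abs_le_iff)
    qed
  qed
  then show "\<bar>(inverse d *\<^sub>R clamp d z) $ i\<bar> \<le> 1 \<and>
     (inverse d *\<^sub>R clamp d z) $ i * soft d z $ i = \<bar>soft d z $ i\<bar>"
    by (simp add: c s divide_inverse mult.commute)
qed

lemma soft_minimizer:
  assumes "d > 0"
  shows "(1/2) * (norm (y - z))\<^sup>2 + d * l1norm y \<ge>
         (1/2) * (norm (soft d z - z))\<^sup>2 + d * l1norm (soft d z) + (1/2) * (norm (y - soft d z))\<^sup>2"
proof -
  let ?s = "soft d z" and ?c = "clamp d z"
  have "l1norm y \<ge> l1norm ?s + (inverse d *\<^sub>R ?c) \<bullet> (y - ?s)"
    by (rule sg_l1[OF sg_clamp[OF assms]])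
  then have 1: "d * l1norm y \<ge> d * l1norm ?s + ?c \<bullet> (y - ?s)"
    using assms by (simp add: field_simps)
  have "y - z = (y - ?s) + (?s - z)" by simp
  then have "(norm (y - z))\<^sup>2 = (norm ((y - ?s) + (?s - z)))\<^sup>2" by (rule arg_cong)
  also have "\<dots> = (norm (y - ?s))\<^sup>2 + 2 * ((y - ?s) \<bullet> (?s - z)) + (norm (?s - z))\<^sup>2"
    by (rule norm_add_sq)
  also have "?s - z = - ?c" by (simp add: soft_def)
  finally have 3: "(norm (y - z))\<^sup>2 = (norm (y - ?s))\<^sup>2 + 2 * ((y - ?s) \<bullet> (- ?c)) + (norm (- ?c))\<^sup>2" .
  have "norm (?s - z) = norm ?c" by (simp add: soft_def)
  with 3 have 2: "(norm (y - z))\<^sup>2 = (norm (y - ?s))\<^sup>2 - 2 * (?c \<bullet> (y - ?s)) + (norm (?s - z))\<^sup>2"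
    by (simp add: inner_commute)
  show ?thesis using 1 2 by linarith
qed

lemma prox_l1:
  assumes "d > 0" shows "prox (\<lambda>x. d * l1norm x) z = soft d z"
  unfolding prox_def
proof (rule the_equality)
  show "\<forall>y. 1 / 2 * (norm (soft d z - z))\<^sup>2 + d * l1norm (soft d z) \<le> 1 / 2 * (norm (y - z))\<^sup>2 + d * l1norm y"
  proof
    fix y
    have "0 \<le> 1/2*(norm(y - soft d z))\<^sup>2" by simp
    with soft_minimizer[OF assms, where y=y and z=z]
    show "1 / 2 * (norm (soft d z - z))\<^sup>2 + d * l1norm (soft d z) \<le> 1 / 2 * (norm (y - z))\<^sup>2 + d * l1norm y"
      by linarith
  qed
next
  fix x assume "\<forall>y. 1 / 2 * (norm (x - z))\<^sup>2 + d * l1norm x \<le> 1 / 2 * (norm (y - z))\<^sup>2 + d * l1norm y"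
  then have "1 / 2 * (norm (x - z))\<^sup>2 + d * l1norm x \<le> 1 / 2 * (norm (soft d z - z))\<^sup>2 + d * l1norm (soft d z)"
    by blast
  with soft_minimizer[OF assms, where y=x and z=z] have "(norm (x - soft d z))\<^sup>2 \<le> 0" by linarith
  then show "x = soft d z" by simp
qed

lemma real_sg:
  fixes a q d :: real
  assumes d: "d > 0" and F: "\<And>t. \<bar>a + t\<bar> - \<bar>a\<bar> + t\<^sup>2 / (2 * d) \<ge> q * t"
  shows "\<bar>q\<bar> \<le> 1 \<and> q * a = \<bar>a\<bar>"
proof -
  have q1: "q \<le> 1"
  proof (rule ccontr)
    assume "\<not> q \<le> 1"
    define t where "t = d * (q - 1)"
    have t: "t > 0" using \<open>\<not> q \<le> 1\<close> d by (simp add: t_def)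
    have "\<bar>a + t\<bar> - \<bar>a\<bar> \<le> t" using t by linarith
    with F[of t] have "t + t\<^sup>2 / (2 * d) \<ge> q * t" by linarith
    then have "t * (1 + t / (2 * d)) \<ge> t * q" using d by (simp add: algebra_simps power2_eq_square)
    then have "1 + t / (2 * d) \<ge> q" using t by (simp add: mult_le_cancel_left)
    moreover have "t / (2 * d) = (q - 1) / 2" using d by (simp add: t_def)
    ultimately have "q \<le> 1 + (q - 1) / 2" by simp
    then show False using \<open>\<not> q \<le> 1\<close> by (simp add: field_simps)
  qed
  have q2: "q \<ge> -1"
  proof (rule ccontr)
    assume "\<not> q \<ge> -1"
    define t where "t = d * (q + 1)"
    have t: "t < 0" using \<open>\<not> q \<ge> -1\<close> d by (simp add: t_def mult_pos_neg)
    have "\<bar>a + t\<bar> - \<bar>a\<bar> \<le> - t" using t by linarith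
    with F[of t] have "- t + t\<^sup>2 / (2 * d) \<ge> q * t" by linarith
    then have "t * (-1 + t / (2 * d)) \<ge> t * q" using d by (simp add: algebra_simps power2_eq_square)
    then have "-1 + t / (2 * d) \<le> q" using t by (simp add: mult_le_cancel_left)
    moreover have "t / (2 * d) = (q + 1) / 2" using d by (simp add: t_def)
    ultimately have "-1 + (q + 1) / 2 \<le> q" by simp
    then show False using \<open>\<not> q \<ge> -1\<close> by (simp add: field_simps)
  qed
  have le: "q * a \<le> \<bar>a\<bar>"
  proof -
    have "\<bar>q * a\<bar> \<le> \<bar>a\<bar>" using q1 q2 by (simp add: abs_mult mult_left_le_one_le)
    then show ?thesis by linarith
  qed
  have ge: "q * a \<ge> \<bar>a\<bar>"
  proof (rule ccontr)
    assume nge: "\<not> q * a \<ge> \<bar>a\<bar>"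
    define g where "g = \<bar>a\<bar> - q * a"
    have g: "g > 0" using nge by (simp add: g_def)
    have a0: "a \<noteq> 0" using nge by auto
    have a2: "a\<^sup>2 > 0" using a0 by simp
    define s where "s = min 1 (d * g / a\<^sup>2)"
    have s0: "s > 0" using d g a2 by (simp add: s_def)
    have s1: "s \<le> 1" by (simp add: s_def)
    have s2: "s * a\<^sup>2 \<le> d * g" using a2 by (simp add: s_def min_def field_simps)
    have "\<bar>a + (- s * a)\<bar> = (1 - s) * \<bar>a\<bar>"
    proof -
      have "a + (- s * a) = (1 - s) * a" by (simp add: algebra_simps)
      then show ?thesis using s1 by (simp add: abs_mult)
    qed
    with F[of "- s * a"] have "(1 - s) * \<bar>a\<bar> - \<bar>a\<bar> + (s * a)\<^sup>2 / (2 * d) \<ge> q * (- s * a)"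
      by (simp add: power2_eq_square)
    then have "s * (s * a\<^sup>2 / (2 * d)) \<ge> s * g"
      by (simp add: g_def algebra_simps power2_eq_square)
    then have "s * a\<^sup>2 / (2 * d) \<ge> g" by (rule mult_left_le_imp_le[OF _ s0])
    moreover have "s * a\<^sup>2 / (2 * d) \<le> g / 2" using s2 d by (simp add: field_simps)
    ultimately show False using g by linarith
  qed
  show ?thesis using q1 q2 le ge by simp
qed

lemma l1_axis: "l1norm (x + axis i t) = l1norm x + (\<bar>x $ i + t\<bar> - \<bar>x $ i\<bar>)"
proof -
  have "l1norm (x + axis i t) = (\<Sum>j\<in>UNIV. \<bar>x $ j\<bar> + (if j = i then \<bar>x $ i + t\<bar> - \<bar>x $ i\<bar> else 0))"
    unfolding l1norm_def by (rule sum.cong) (auto simp: axis_def)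
  also have "\<dots> = l1norm x + (\<bar>x $ i + t\<bar> - \<bar>x $ i\<bar>)"
    by (simp add: sum.distrib l1norm_def)
  finally show ?thesis .
qed

lemma subdiff_sg:
  assumes d: "d > 0" and v: "v \<in> subdiff (Jdelta l1norm d) x"
  shows "sg (v - inverse d *\<^sub>R x) x"
  unfolding sg_def
proof
  fix i
  let ?q = "v $ i - x $ i / d"
  have "\<bar>x $ i + t\<bar> - \<bar>x $ i\<bar> + t\<^sup>2 / (2 * d) \<ge> ?q * t" for t
  proof -
    have "Jdelta l1norm d (x + axis i t) \<ge> Jdelta l1norm d x + v \<bullet> (x + axis i t - x)"
      using v unfolding subdiff_def mem_Collect_eq by (erule_tac x="x + axis i t" in allE) simp
    moreover have "(norm (x + axis i t))\<^sup>2 = (norm x)\<^sup>2 + 2 * (x $ i * t) + t\<^sup>2"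
    proof -
      have "(norm (axis i t))\<^sup>2 = t\<^sup>2"
        unfolding power2_norm_eq_inner inner_axis by (simp add: axis_def power2_eq_square)
      then show ?thesis by (simp add: norm_add_sq inner_axis)
    qed
    ultimately have "l1norm x + (\<bar>x $ i + t\<bar> - \<bar>x $ i\<bar>) + ((norm x)\<^sup>2 + 2 * (x $ i * t) + t\<^sup>2) / (2 * d)
        \<ge> l1norm x + (norm x)\<^sup>2 / (2 * d) + v $ i * t"
      by (simp add: Jdelta_def l1_axis inner_axis)
    then show ?thesis using d by (simp add: field_simps)
  qed
  from real_sg[OF d this] show "\<bar>(v - inverse d *\<^sub>R x) $ i\<bar> \<le> 1 \<and> (v - inverse d *\<^sub>R x) $ i * x $ i = \<bar>x $ i\<bar>"
    by (simp add: divide_inverse mult.commute)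
qed

lemma real_breg:
  fixes a b p :: real
  assumes p1: "\<bar>p\<bar> \<le> 1" and pb: "p * b = \<bar>b\<bar>"
  shows "\<bar>a\<bar> - p * a \<le> (if a = 0 then 0 else 2 / \<bar>a\<bar>) * (a - b)\<^sup>2"
proof (cases "a = 0")
  case True then show ?thesis by simp
next
  case a0: False
  have pa: "\<bar>p * a\<bar> \<le> \<bar>a\<bar>" using p1 by (simp add: abs_mult mult_left_le_one_le)
  show ?thesis
  proof (cases "\<bar>a - b\<bar> \<ge> \<bar>a\<bar>")
    case True
    have "\<bar>a\<bar> - p * a \<le> 2 * \<bar>a\<bar>" using pa by linarith
    also have "\<dots> = 2 / \<bar>a\<bar> * \<bar>a\<bar>\<^sup>2" using a0 by (simp add: field_simps power2_eq_square abs_mult_self_eq)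
    also have "\<dots> \<le> 2 / \<bar>a\<bar> * \<bar>a - b\<bar>\<^sup>2"
      using True by (intro mult_left_mono power_mono) auto
    finally show ?thesis using a0 by simp
  next
    case False
    then have "(a > 0 \<and> b > 0) \<or> (a < 0 \<and> b < 0)" using a0 by (auto simp: abs_if split: if_splits)
    then have "p * a = \<bar>a\<bar>"
    proof
      assume "a > 0 \<and> b > 0"
      then have "p = 1" using pb by (metis abs_of_pos mult_cancel_right2 order_less_irrefl)
      then show ?thesis using \<open>a > 0 \<and> b > 0\<close> by simp
    next
      assume "a < 0 \<and> b < 0"
      then have "p * b = - b" using pb by simp
      then have "p = -1" using \<open>a < 0 \<and> b < 0\<close>
        by (metis mult_cancel_right mult_minus1 mult.commute order_less_irrefl)
      then show ?thesis using \<open>a < 0 \<and> b < 0\<close> by simp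
    qed
    then show ?thesis using a0 by simp
  qed
qed

definition Cst :: "real ^ 'n \<Rightarrow> real" where
  "Cst a = (\<Sum>i\<in>UNIV. if a $ i = 0 then 0 else 2 / \<bar>a $ i\<bar>)"

lemma norm_sq_vec: "(norm (x :: real ^ 'n))\<^sup>2 = (\<Sum>i\<in>UNIV. (x $ i)\<^sup>2)"
  unfolding power2_norm_eq_inner inner_vec_def by (simp add: power2_eq_square)

lemma sg_upper:
  assumes "sg p x"
  shows "l1norm a - l1norm x - p \<bullet> (a - x) \<le> Cst a * (norm (a - x))\<^sup>2"
proof -
  have px: "p \<bullet> x = l1norm x" using assms
    by (simp add: sg_def inner_vec_def l1norm_def)
  have "l1norm a - l1norm x - p \<bullet> (a - x) = (\<Sum>i\<in>UNIV. \<bar>a $ i\<bar> - p $ i * a $ i)"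
    using px by (simp add: inner_diff_right l1norm_def inner_vec_def sum_subtractf right_diff_distrib)
  also have "\<dots> \<le> (\<Sum>i\<in>UNIV. Cst a * (a $ i - x $ i)\<^sup>2)"
  proof (rule sum_mono)
    fix i
    have c: "(if a $ i = 0 then 0 else 2 / \<bar>a $ i\<bar>) \<le> Cst a"
      unfolding Cst_def by (rule member_le_sum) auto
    have "\<bar>a $ i\<bar> - p $ i * a $ i \<le> (if a $ i = 0 then 0 else 2 / \<bar>a $ i\<bar>) * (a $ i - x $ i)\<^sup>2"
      using assms by (intro real_breg) (auto simp: sg_def)
    also have "\<dots> \<le> Cst a * (a $ i - x $ i)\<^sup>2"
      using c by (intro mult_right_mono) auto
    finally show "\<bar>a $ i\<bar> - p $ i * a $ i \<le> Cst a * (a $ i - x $ i)\<^sup>2" .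
  qed
  also have "\<dots> = Cst a * (norm (a - x))\<^sup>2"
    by (simp add: norm_sq_vec sum_distrib_left)
  finally show ?thesis .
qed

lemma Cst_nonneg: "Cst a \<ge> 0"
  unfolding Cst_def by (rule sum_nonneg) auto

lemma breg_decomp:
  assumes d: "d > 0"
  shows "bregman (Jdelta l1norm d) v a x
    = (l1norm a - l1norm x - (v - inverse d *\<^sub>R x) \<bullet> (a - x)) + (norm (a - x))\<^sup>2 / (2 * d)"
proof -
  have "(norm a)\<^sup>2 / (2 * d) = (norm x)\<^sup>2 / (2*d) + (inverse d *\<^sub>R x) \<bullet> (a - x) + (norm (a - x))\<^sup>2 / (2 * d)"
    using d by (subst norm_sq_expand[of a x]) (simp add: field_simps)
  then show ?thesis unfolding bregman_def Jdelta_def by (simp add: inner_diff_left)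
qed

lemma breg_bounds:
  assumes d: "d > 0" and s: "sg (v - inverse d *\<^sub>R x) x"
  shows "bregman (Jdelta l1norm d) v a x \<ge> (norm (a - x))\<^sup>2 / (2 * d)"
    and "bregman (Jdelta l1norm d) v a x \<le> (Cst a + 1 / (2 * d)) * (norm (a - x))\<^sup>2"
proof -
  have "l1norm a \<ge> l1norm x + (v - inverse d *\<^sub>R x) \<bullet> (a - x)" by (rule sg_l1[OF s])
  then show "bregman (Jdelta l1norm d) v a x \<ge> (norm (a - x))\<^sup>2 / (2 * d)"
    using breg_decomp[OF d, of v a x] by linarith
  show "bregman (Jdelta l1norm d) v a x \<le> (Cst a + 1 / (2 * d)) * (norm (a - x))\<^sup>2"
    using breg_decomp[OF d, of v a x] sg_upper[OF s, of a] by (simp add: algebra_simps)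
qed

lemma seq_lemma:
  fixes d e \<tau> :: "nat \<Rightarrow> real" and a c C :: real
  assumes d0: "\<And>k. d k \<ge> 0" and e0: "\<And>k. e k \<ge> 0" and t0: "\<And>k. \<tau> k \<ge> 0"
    and a: "a > 0" and C: "C > 0" and c: "c \<ge> 0"
    and step: "\<And>k. d (Suc k) \<le> d k - a * \<tau> k * e k + c * (\<tau> k)\<^sup>2"
    and dC: "\<And>k. d k \<le> C * e k"
    and sq: "summable (\<lambda>k. (\<tau> k)\<^sup>2)"
    and div: "filterlim (\<lambda>n. \<Sum>k<n. \<tau> k) at_top sequentially"
  shows "d \<longlonglongrightarrow> 0"
proof -
  define S where "S = (\<Sum>k. (\<tau> k)\<^sup>2)"
  define u where "u k = d k + c * (S - (\<Sum>j<k. (\<tau> j)\<^sup>2))" for k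
  have pS: "(\<Sum>j<k. (\<tau> j)\<^sup>2) \<le> S" for k
    unfolding S_def by (rule sum_le_suminf[OF sq]) auto
  have "decseq u"
  proof (rule decseq_SucI)
    fix k
    have "a * \<tau> k * e k \<ge> 0" using a t0 e0 by simp
    then show "u (Suc k) \<le> u k" using step[of k] by (simp add: u_def algebra_simps)
  qed
  moreover have "\<forall>k. 0 \<le> u k" using d0 pS c by (simp add: u_def)
  ultimately obtain L where uL: "u \<longlonglongrightarrow> L" by (rule decseq_convergent)
  have R: "(\<lambda>k. c * (S - (\<Sum>j<k. (\<tau> j)\<^sup>2))) \<longlonglongrightarrow> c * (S - S)"
    unfolding S_def by (intro tendsto_intros summable_LIMSEQ[OF sq])
  have dL: "d \<longlonglongrightarrow> L - 0"
  proof -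
    have "(\<lambda>k. u k - c * (S - (\<Sum>j<k. (\<tau> j)\<^sup>2))) \<longlonglongrightarrow> L - c * (S - S)"
      by (intro tendsto_intros uL R)
    then show ?thesis by (simp add: u_def)
  qed
  then have dL': "d \<longlonglongrightarrow> L" by simp
  have L0: "L \<ge> 0" by (rule LIMSEQ_le_const[OF dL']) (simp add: d0)
  have "L = 0"
  proof (rule ccontr)
    assume "L \<noteq> 0"
    then have Lp: "L > 0" using L0 by simp
    have "eventually (\<lambda>k. d k > L / 2) sequentially"
      using order_tendstoD(1)[OF dL', of "L/2"] Lp by simp
    then obtain N where N: "\<And>k. k \<ge> N \<Longrightarrow> d k > L / 2" by (auto simp: eventually_sequentially)
    define b where "b = a * L / (2 * C)"
    have b: "b > 0" using a Lp C by (simp add: b_def)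
    have eb: "a * e k \<ge> b" if "k \<ge> N" for k
    proof -
      have "L / 2 < C * e k" using N[OF that] dC[of k] by linarith
      then have "L / (2 * C) \<le> e k" using C by (simp add: field_simps)
      then have "a * (L / (2 * C)) \<le> a * e k" using a by (intro mult_left_mono) auto
      then show ?thesis by (simp add: b_def)
    qed
    have tele: "b * (\<Sum>k<m. \<tau> (N + k)) \<le> d N - d (N + m) + c * (\<Sum>k<m. (\<tau> (N + k))\<^sup>2)" for m
    proof (induction m)
      case 0 then show ?case by simp
    next
      case (Suc m)
      have "b * \<tau> (N + m) \<le> a * \<tau> (N + m) * e (N + m)"
      proof -
        have "\<tau> (N + m) * b \<le> \<tau> (N + m) * (a * e (N + m))"
          using eb[of "N + m"] t0[of "N+m"] by (intro mult_left_mono) auto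
        then show ?thesis by (simp add: algebra_simps)
      qed
      then show ?case using Suc step[of "N + m"] by (simp add: algebra_simps)
    qed
    have sh: "(\<Sum>k<N + m. f k) = (\<Sum>k<N. f k) + (\<Sum>k<m. f (N + k))" for f :: "nat \<Rightarrow> real" and m
      by (induction m) (simp_all add: add.assoc)
    define B where "B = (\<Sum>k<N. \<tau> k) + (d N + c * S) / b"
    have bound: "(\<Sum>k<n. \<tau> k) \<le> B" for n
    proof (cases "n \<le> N")
      case True
      have "(\<Sum>k<n. \<tau> k) \<le> (\<Sum>k<N. \<tau> k)"
        using True t0 by (intro sum_mono2) auto
      moreover have "(d N + c * S) / b \<ge> 0"
        using d0 c pS[of 0] b by simp
      ultimately show ?thesis by (simp add: B_def)
    next
      case False
      then obtain m where n: "n = N + m" by (metis le_add_diff_inverse nat_le_linear)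
      have "(\<Sum>k<m. (\<tau> (N + k))\<^sup>2) \<le> S"
        using sh[of "\<lambda>k. (\<tau> k)\<^sup>2" m] pS[of "N + m"]
        by (smt (verit, ccfv_SIG) sum_nonneg zero_le_power2)
      then have "b * (\<Sum>k<m. \<tau> (N + k)) \<le> d N + c * S"
        using tele[of m] d0[of "N + m"] c by (smt (verit) mult_left_mono)
      then have "(\<Sum>k<m. \<tau> (N + k)) \<le> (d N + c * S) / b"
        using b by (simp add: field_simps mult.commute)
      then show ?thesis using sh[of \<tau> m] by (simp add: n B_def)
    qed
    have "eventually (\<lambda>n. B + 1 \<le> (\<Sum>k<n. \<tau> k)) sequentially"
      using div by (simp add: filterlim_at_top)
    then obtain n where "B + 1 \<le> (\<Sum>k<n. \<tau> k)" by (auto simp: eventually_sequentially)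
    with bound[of n] show False by linarith
  qed
  then show ?thesis using dL' by simp
qed

lemma soft_meas: "soft d \<in> borel_measurable (borel :: (real ^ 'n) measure)"
proof -
  have "continuous_on UNIV (\<lambda>z::real^'n. z - (\<chi> i. max (-d) (min d (z $ i))))"
    by (intro continuous_intros)
  then show ?thesis unfolding soft_def[abs_def] clamp_def
    by (rule borel_measurable_continuous_onI)
qed

lemma young:
  fixes u w :: "'a::real_inner" and d :: real
  assumes "d > 0"
  shows "u \<bullet> w \<le> d / 2 * (norm u)\<^sup>2 + (norm w)\<^sup>2 / (2 * d)"
proof -
  have "0 \<le> (norm (d *\<^sub>R u - w))\<^sup>2" by simp
  also have "\<dots> = (d *\<^sub>R u - w) \<bullet> (d *\<^sub>R u - w)" by (rule power2_norm_eq_inner)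
  also have "\<dots> = d\<^sup>2 * (u \<bullet> u) - 2 * d * (u \<bullet> w) + w \<bullet> w"
    by (simp add: inner_diff_left inner_diff_right inner_commute power2_eq_square algebra_simps)
  also have "\<dots> = d\<^sup>2 * (norm u)\<^sup>2 - 2 * d * (u \<bullet> w) + (norm w)\<^sup>2"
    by (simp add: power2_norm_eq_inner)
  finally have "2 * d * (u \<bullet> w) \<le> d\<^sup>2 * (norm u)\<^sup>2 + (norm w)\<^sup>2" by linarith
  then show ?thesis using assms by (simp add: field_simps power2_eq_square)
qed

lemma step_ineq:
  assumes d: "d > 0" and s: "sg (v - inverse d *\<^sub>R x) x"
  shows "bregman (Jdelta l1norm d) (v - t *\<^sub>R G) a x'
     \<le> bregman (Jdelta l1norm d) v a x + t * (G \<bullet> (a - x)) + d / 2 * t\<^sup>2 * (norm G)\<^sup>2"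
proof -
  let ?J = "Jdelta l1norm d"
  have id: "bregman ?J (v - t *\<^sub>R G) a x' = bregman ?J v a x - bregman ?J v x' x + t * (G \<bullet> (a - x'))"
    unfolding bregman_def by (simp add: inner_diff_left inner_diff_right algebra_simps)
  have b: "bregman ?J v x' x \<ge> (norm (x' - x))\<^sup>2 / (2 * d)" by (rule breg_bounds(1)[OF d s])
  have y: "(t *\<^sub>R G) \<bullet> (x - x') \<le> d / 2 * (norm (t *\<^sub>R G))\<^sup>2 + (norm (x - x'))\<^sup>2 / (2 * d)"
    by (rule young[OF d])
  have "t * (G \<bullet> (a - x')) = t * (G \<bullet> (a - x)) + (t *\<^sub>R G) \<bullet> (x - x')"
    by (simp add: inner_diff_right algebra_simps)
  moreover have "(norm (t *\<^sub>R G))\<^sup>2 = t\<^sup>2 * (norm G)\<^sup>2" by (simp add: power_mult_distrib)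
  moreover have "norm (x - x') = norm (x' - x)" by (rule norm_minus_commute)
  ultimately show ?thesis using id b y by (simp add: algebra_simps)
qed

lemma tau_nonneg:
  fixes \<tau> :: "nat \<Rightarrow> real"
  assumes mono: "\<forall>k. \<tau> (Suc k) \<le> \<tau> k" and div: "filterlim (\<lambda>n. \<Sum>k<n. \<tau> k) at_top sequentially"
  shows "\<tau> k \<ge> 0"
proof (rule ccontr)
  assume "\<not> \<tau> k \<ge> 0"
  then have neg: "\<tau> k < 0" by simp
  define B where "B = (\<Sum>j<k. \<bar>\<tau> j\<bar>)"
  have bound: "(\<Sum>j<n. \<tau> j) \<le> B" for n
  proof (induction n)
    case 0 then show ?case by (simp add: B_def sum_nonneg)
  next
    case (Suc n)
    show ?case
    proof (cases "n < k")
      case True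
      have "(\<Sum>j<Suc n. \<tau> j) \<le> (\<Sum>j<Suc n. \<bar>\<tau> j\<bar>)" by (intro sum_mono) simp
      also have "\<dots> \<le> B" unfolding B_def using True by (intro sum_mono2) auto
      finally show ?thesis .
    next
      case False
      then have "\<tau> n \<le> \<tau> k" using lift_Suc_antimono_le[of \<tau> k n] mono by simp
      then show ?thesis using Suc neg by simp
    qed
  qed
  have "eventually (\<lambda>n. B + 1 \<le> (\<Sum>k<n. \<tau> k)) sequentially"
    using div by (simp add: filterlim_at_top)
  then obtain n where "B + 1 \<le> (\<Sum>k<n. \<tau> k)" by (auto simp: eventually_sequentially)
  with bound[of n] show False by linarith
qed

lemma slbi_local:
  "(\<forall>j<k. ws j = ws' j) \<Longrightarrow> slbi J d g \<tau> x0 v0 ws k = slbi J d g \<tau> x0 v0 ws' k"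
  by (induction k) (simp_all add: Let_def)

lemma slbi_meas:
  fixes g :: "real ^ 'n \<Rightarrow> 'w \<Rightarrow> real ^ 'n"
  assumes d: "d > 0" and g_meas: "(\<lambda>(x, w). g x w) \<in> borel_measurable (borel \<Otimes>\<^sub>M M)"
  shows "{..<k} \<subseteq> I \<Longrightarrow>
    (\<lambda>ws. fst (slbi l1norm d g \<tau> x0 v0 ws k)) \<in> borel_measurable (PiM I (\<lambda>_. M)) \<and>
    (\<lambda>ws. snd (slbi l1norm d g \<tau> x0 v0 ws k)) \<in> borel_measurable (PiM I (\<lambda>_. M))"
proof (induction k)
  case 0 then show ?case by simp
next
  case (Suc k)
  have sub: "{..<k} \<subseteq> I" using Suc.prems by auto
  have IH: "(\<lambda>ws. fst (slbi l1norm d g \<tau> x0 v0 ws k)) \<in> borel_measurable (PiM I (\<lambda>_. M))"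
     "(\<lambda>ws. snd (slbi l1norm d g \<tau> x0 v0 ws k)) \<in> borel_measurable (PiM I (\<lambda>_. M))"
    using Suc.IH[OF sub] by auto
  have kI: "k \<in> I" using Suc.prems by auto
  have ev: "(\<lambda>ws. ws k) \<in> measurable (PiM I (\<lambda>_. M)) M"
    by (rule measurable_component_singleton[OF kI])
  have "(\<lambda>ws. (fst (slbi l1norm d g \<tau> x0 v0 ws k), ws k)) \<in> measurable (PiM I (\<lambda>_. M)) (borel \<Otimes>\<^sub>M M)"
    by (rule measurable_Pair[OF IH(1) ev])
  from measurable_compose[OF this g_meas]
  have G: "(\<lambda>ws. g (fst (slbi l1norm d g \<tau> x0 v0 ws k)) (ws k)) \<in> borel_measurable (PiM I (\<lambda>_. M))"
    by simp
  define V where "V = (\<lambda>ws. snd (slbi l1norm d g \<tau> x0 v0 ws k) - \<tau> k *\<^sub>R g (fst (slbi l1norm d g \<tau> x0 v0 ws k)) (ws k))"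
  have V: "V \<in> borel_measurable (PiM I (\<lambda>_. M))"
    unfolding V_def using IH(2) G by measurable
  have "(\<lambda>ws. soft d (d *\<^sub>R V ws)) \<in> borel_measurable (PiM I (\<lambda>_. M))"
    using measurable_compose[OF _ soft_meas, of "\<lambda>ws. d *\<^sub>R V ws"] V by measurable
  then show ?case using V
    by (simp add: Let_def prox_l1[OF d] V_def)
qed

lemma sg_next:
  assumes d: "d > 0"
  shows "sg (w - inverse d *\<^sub>R soft d (d *\<^sub>R w)) (soft d (d *\<^sub>R w))"
proof -
  have "w - inverse d *\<^sub>R soft d (d *\<^sub>R w) = inverse d *\<^sub>R clamp d (d *\<^sub>R w)"
    using d by (simp add: soft_def scaleR_diff_right)
  then show ?thesis using sg_clamp[OF d, of "d *\<^sub>R w"] by simp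
qed

lemma inner_var:
  fixes f :: "'w \<Rightarrow> 'a::{real_inner, banach, second_countable_topology}"
  assumes pM: "prob_space M" and i: "integrable M f" and e: "integral\<^sup>L M f = G"
    and iv: "integrable M (\<lambda>w. (norm (f w - G))\<^sup>2)" and v: "(\<integral>w. (norm (f w - G))\<^sup>2 \<partial>M) \<le> s"
  shows "integrable M (\<lambda>w. (norm (f w))\<^sup>2) \<and> (\<integral>w. (norm (f w))\<^sup>2 \<partial>M) \<le> (norm G)\<^sup>2 + s"
proof -
  interpret prob_space M by (rule pM)
  have eq: "(norm (f w))\<^sup>2 = (norm (f w - G))\<^sup>2 + 2 * ((f w - G) \<bullet> G) + (norm G)\<^sup>2" for w
    using norm_add_sq[of "f w - G" G] by simp
  have i2: "integrable M (\<lambda>w. (f w - G) \<bullet> G)"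
    using i by (intro integrable_inner_left) auto
  have z: "(\<integral>w. (f w - G) \<bullet> G \<partial>M) = 0"
  proof -
    have "(\<integral>w. (f w - G) \<bullet> G \<partial>M) = (\<integral>w. (f w - G) \<partial>M) \<bullet> G"
      using i by (intro integral_inner_left) auto
    also have "(\<integral>w. (f w - G) \<partial>M) = 0"
      using i e by (simp add: Bochner_Integration.integral_diff prob_space)
    finally show ?thesis by simp
  qed
  have i3: "integrable M (\<lambda>w. (norm (f w - G))\<^sup>2 + 2 * ((f w - G) \<bullet> G) + (norm G)\<^sup>2)"
    using iv i2 by auto
  have "(\<integral>w. (norm (f w))\<^sup>2 \<partial>M) = (\<integral>w. (norm (f w - G))\<^sup>2 + 2 * ((f w - G) \<bullet> G) + (norm G)\<^sup>2 \<partial>M)"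
    by (simp only: eq)
  also have "\<dots> = (\<integral>w. (norm (f w - G))\<^sup>2 \<partial>M) + 2 * (\<integral>w. (f w - G) \<bullet> G \<partial>M) + (norm G)\<^sup>2"
    using iv i2 by (simp add: Bochner_Integration.integral_add prob_space)
  finally have "(\<integral>w. (norm (f w))\<^sup>2 \<partial>M) = (\<integral>w. (norm (f w - G))\<^sup>2 \<partial>M) + (norm G)\<^sup>2"
    using z by simp
  moreover have "integrable M (\<lambda>w. (norm (f w))\<^sup>2)" using i3 by (simp only: eq)
  ultimately show ?thesis using v by simp
qed

theorem corollary3p4:
  fixes L :: "real ^ 'n \<Rightarrow> real" and gradL :: "real ^ 'n \<Rightarrow> real ^ 'n"
    and g :: "real ^ 'n \<Rightarrow> 'w \<Rightarrow> real ^ 'n"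
    and M :: "'w measure" and P :: "'s measure" and \<omega> :: "nat \<Rightarrow> 's \<Rightarrow> 'w"
    and \<tau> :: "nat \<Rightarrow> real" and \<delta> Lc \<mu> \<sigma> :: real
    and \<theta>0 v0 \<theta>star :: "real ^ 'n"
    and \<theta> v :: "nat \<Rightarrow> 's \<Rightarrow> real ^ 'n"
  defines "\<theta> \<equiv> (\<lambda>k s. fst (slbi l1norm \<delta> g \<tau> \<theta>0 v0 (\<lambda>j. \<omega> j s) k))"
      and "v \<equiv> (\<lambda>k s. snd (slbi l1norm \<delta> g \<tau> \<theta>0 v0 (\<lambda>j. \<omega> j s) k))"
  assumes probM: "prob_space M" and probP: "prob_space P"
    and indep: "prob_space.indep_vars P (\<lambda>_. M) \<omega> UNIV"
    and law: "\<forall>k. distr P M (\<omega> k) = M"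
    and g_meas: "(\<lambda>(x, w). g x w) \<in> borel_measurable (borel \<Otimes>\<^sub>M M)"
    and g_unbiased: "\<forall>x. integrable M (g x) \<and> integral\<^sup>L M (g x) = gradL x"
    (* (A) *)
    and L_nonneg: "\<forall>x. L x \<ge> 0"
    and L_grad: "\<forall>x. (L has_derivative (\<lambda>h. gradL x \<bullet> h)) (at x)"
    and Lc_pos: "Lc > 0"
    and grad_lip: "\<forall>x y. norm (gradL x - gradL y) \<le> Lc * norm (x - y)"
    (* (B) *)
    and \<sigma>_pos: "\<sigma> > 0"
    and var_bound: "\<forall>x. integrable M (\<lambda>w. (norm (g x w - gradL x))\<^sup>2)
                        \<and> (\<integral>w. (norm (g x w - gradL x))\<^sup>2 \<partial>M) \<le> \<sigma>\<^sup>2"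
    (* (C) *)
    and \<mu>_pos: "\<mu> > 0"
    and strong_conv: "\<forall>x y. L y \<ge> L x + gradL x \<bullet> (y - x) + \<mu> / 2 * (norm (y - x))\<^sup>2"
    (* parameters and step sizes *)
    and \<delta>_pos: "\<delta> > 0"
    and \<tau>_small: "\<forall>k. \<tau> k \<le> \<mu> / (2 * \<delta> * Lc\<^sup>2)"
    and \<tau>_mono: "\<forall>k. \<tau> (Suc k) \<le> \<tau> k"
    and \<tau>_sq_sum: "summable (\<lambda>k. (\<tau> k)\<^sup>2)"
    and \<tau>_sum: "filterlim (\<lambda>n. \<Sum>k<n. \<tau> k) at_top sequentially"
    (* initialisation *)
    and v0_sub: "v0 \<in> subdiff (Jdelta l1norm \<delta>) \<theta>0"
    (* minimiser *)
    and \<theta>star_min: "\<forall>x. L \<theta>star \<le> L x"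
    (* all expectations appearing are finite *)
    and int_D: "\<forall>k. integrable P (\<lambda>s. bregman (Jdelta l1norm \<delta>) (v k s) \<theta>star (\<theta> k s))"
    and int_L: "\<forall>k. integrable P (\<lambda>s. L (\<theta> k s))"
    and int_g: "\<forall>k. integrable P (\<lambda>s. (norm (g (\<theta> k s) (\<omega> k s)))\<^sup>2)"
    and int_dist: "\<forall>k. integrable P (\<lambda>s. (norm (\<theta>star - \<theta> k s))\<^sup>2)"
  shows "((\<lambda>k. \<integral>s. bregman (Jdelta l1norm \<delta>) (v k s) \<theta>star (\<theta> k s) \<partial>P) \<longlonglongrightarrow> 0)
       \<and> (\<lambda>k. \<integral>s. (norm (\<theta>star - \<theta> k s))\<^sup>2 \<partial>P) \<longlonglongrightarrow> 0"
proof -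
  interpret P: prob_space P by (rule probP)
  interpret Mp: prob_space M by (rule probM)
  have rv: "\<And>i. \<omega> i \<in> measurable P M"
    using indep unfolding P.indep_vars_def by auto
  have t0: "\<And>k. \<tau> k \<ge> 0" using tau_nonneg[OF \<tau>_mono \<tau>_sum] .
  have G0: "gradL \<theta>star = 0"
  proof -
    have "(\<lambda>h. gradL \<theta>star \<bullet> h) = (\<lambda>v. 0)"
      by (rule differential_zero_maxmin[where x=\<theta>star and S=UNIV and f=L]) (use L_grad \<theta>star_min in auto)
    then have "gradL \<theta>star \<bullet> gradL \<theta>star = 0" by metis
    then show ?thesis by simp
  qed
  define F where "F k = (\<lambda>ws. fst (slbi l1norm \<delta> g \<tau> \<theta>0 v0 ws k))" for k
  have Fm: "F k \<in> borel_measurable (PiM {..<k} (\<lambda>_. M))" for k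
    unfolding F_def using slbi_meas[OF \<delta>_pos g_meas, of k "{..<k}"] by simp
  have \<theta>F: "F k (restrict (\<lambda>i. \<omega> i s) {..<k}) = \<theta> k s" for k s
  proof -
    have "slbi l1norm \<delta> g \<tau> \<theta>0 v0 (restrict (\<lambda>i. \<omega> i s) {..<k}) k = slbi l1norm \<delta> g \<tau> \<theta>0 v0 (\<lambda>j. \<omega> j s) k"
      by (rule slbi_local) simp
    then show ?thesis unfolding F_def \<theta>_def by simp
  qed
  have \<theta>m: "\<theta> k \<in> borel_measurable P" for k
  proof -
    have "(\<lambda>s. restrict (\<lambda>i. \<omega> i s) {..<k}) \<in> measurable P (PiM {..<k} (\<lambda>_. M))"
      by (rule measurable_restrict) (simp add: rv)
    from measurable_compose[OF this Fm[of k]] show ?thesis by (simp add: \<theta>F)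
  qed
  have vS: "v (Suc k) s = v k s - \<tau> k *\<^sub>R g (\<theta> k s) (\<omega> k s)" for k s
    unfolding v_def \<theta>_def by (simp add: Let_def)
  have \<theta>S: "\<theta> (Suc k) s = soft \<delta> (\<delta> *\<^sub>R v (Suc k) s)" for k s
    unfolding v_def \<theta>_def by (simp add: Let_def prox_l1[OF \<delta>_pos])
  have sgk: "sg (v k s - inverse \<delta> *\<^sub>R \<theta> k s) (\<theta> k s)" for k s
  proof (cases k)
    case 0
    then show ?thesis using subdiff_sg[OF \<delta>_pos v0_sub] by (simp add: \<theta>_def v_def)
  next
    case (Suc j)
    then show ?thesis using sg_next[OF \<delta>_pos, of "v (Suc j) s"] by (simp add: \<theta>S)
  qed
  define D where "D k s = bregman (Jdelta l1norm \<delta>) (v k s) \<theta>star (\<theta> k s)" for k s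
  define A where "A k s = g (\<theta> k s) (\<omega> k s) \<bullet> (\<theta>star - \<theta> k s)" for k s
  define B where "B k s = (norm (g (\<theta> k s) (\<omega> k s)))\<^sup>2" for k s
  define dd where "dd k = (\<integral>s. D k s \<partial>P)" for k
  define e where "e k = (\<integral>s. (norm (\<theta>star - \<theta> k s))\<^sup>2 \<partial>P)" for k
  have stepP: "D (Suc k) s \<le> D k s + \<tau> k * A k s + \<delta> / 2 * (\<tau> k)\<^sup>2 * B k s" for k s
    unfolding D_def A_def B_def vS using step_ineq[OF \<delta>_pos sgk] by simp
  have gm2: "(\<lambda>p. g (fst p) (snd p)) \<in> borel_measurable (borel \<Otimes>\<^sub>M M)"
    using g_meas by (simp add: case_prod_beta)
  have gm: "(\<lambda>s. g (\<theta> k s) (\<omega> k s)) \<in> borel_measurable P" for k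
  proof -
    have "(\<lambda>s. (\<theta> k s, \<omega> k s)) \<in> measurable P (borel \<Otimes>\<^sub>M M)"
      by (rule measurable_Pair[OF \<theta>m rv])
    from measurable_compose[OF this gm2] show ?thesis by simp
  qed
  have intA: "integrable P (A k)" for k
  proof (rule Bochner_Integration.integrable_bound)
    show "integrable P (\<lambda>s. B k s + (norm (\<theta>star - \<theta> k s))\<^sup>2)"
      unfolding B_def using int_g int_dist by auto
    show "A k \<in> borel_measurable P"
      unfolding A_def
      by (rule borel_measurable_inner[OF gm borel_measurable_diff[OF borel_measurable_const \<theta>m]])
    show "AE s in P. norm (A k s) \<le> norm (B k s + (norm (\<theta>star - \<theta> k s))\<^sup>2)"
    proof (rule AE_I2)
      fix s
      let ?a = "norm (g (\<theta> k s) (\<omega> k s))" and ?b = "norm (\<theta>star - \<theta> k s)"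
      have "\<bar>A k s\<bar> \<le> ?a * ?b" unfolding A_def by (rule Cauchy_Schwarz_ineq2)
      also have "\<dots> \<le> ?a\<^sup>2 + ?b\<^sup>2"
      proof -
        have "0 \<le> (?a - ?b)\<^sup>2" by simp
        then have "2 * ?a * ?b \<le> ?a\<^sup>2 + ?b\<^sup>2" by (simp add: power2_diff)
        moreover have "0 \<le> ?a * ?b" by simp
        ultimately show ?thesis by linarith
      qed
      finally show "norm (A k s) \<le> norm (B k s + ?b\<^sup>2)" unfolding B_def by simp
    qed
  qed
  have intB: "integrable P (B k)" for k unfolding B_def using int_g by simp
  have intD: "integrable P (D k)" for k unfolding D_def using int_D by simp
  have lawk: "distr P M (\<omega> k) = M" for k using law by simp
  have EA: "(\<integral>s. A k s \<partial>P) \<le> - \<mu> * e k" for k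
  proof -
    define h where "h = (\<lambda>p. g (fst p) (snd p) \<bullet> (\<theta>star - fst p))"
    have hm: "h \<in> borel_measurable (borel \<Otimes>\<^sub>M M)" unfolding h_def using gm2 by measurable
    have ih: "integrable P (\<lambda>s. h (F k (restrict (\<lambda>i. \<omega> i s) {..<k}), \<omega> k s))"
      using intA[of k] unfolding A_def[abs_def] by (simp add: \<theta>F h_def)
    note R = indep_step[OF probP indep lawk Fm hm ih]
    have inner: "(\<integral>w. h (x, w) \<partial>M) = gradL x \<bullet> (\<theta>star - x)" for x
    proof -
      have "(\<integral>w. h (x, w) \<partial>M) = (\<integral>w. g x w \<partial>M) \<bullet> (\<theta>star - x)"
        unfolding h_def using g_unbiased by (simp add: integral_inner_left)
      then show ?thesis using g_unbiased by simp
    qed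
    have R2: "integrable P (\<lambda>s. gradL (\<theta> k s) \<bullet> (\<theta>star - \<theta> k s))
       \<and> (\<integral>s. A k s \<partial>P) = (\<integral>s. gradL (\<theta> k s) \<bullet> (\<theta>star - \<theta> k s) \<partial>P)"
      using R by (simp only: \<theta>F inner) (simp add: A_def h_def)
    have pw: "gradL x \<bullet> (\<theta>star - x) \<le> - \<mu> * (norm (\<theta>star - x))\<^sup>2" for x
    proof -
      have 1: "L \<theta>star \<ge> L x + gradL x \<bullet> (\<theta>star - x) + \<mu> / 2 * (norm (\<theta>star - x))\<^sup>2"
        using strong_conv by blast
      have 2: "L x \<ge> L \<theta>star + gradL \<theta>star \<bullet> (x - \<theta>star) + \<mu> / 2 * (norm (x - \<theta>star))\<^sup>2"
        using strong_conv by blast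
      have 3: "norm (x - \<theta>star) = norm (\<theta>star - x)" by (rule norm_minus_commute)
      show ?thesis using 1 2 3 G0 by simp
    qed
    have "(\<integral>s. gradL (\<theta> k s) \<bullet> (\<theta>star - \<theta> k s) \<partial>P) \<le> (\<integral>s. - \<mu> * (norm (\<theta>star - \<theta> k s))\<^sup>2 \<partial>P)"
      using R2 int_dist pw by (intro integral_mono) auto
    also have "\<dots> = - \<mu> * e k" by (simp add: e_def)
    finally show ?thesis using R2 by simp
  qed
  have EB: "(\<integral>s. B k s \<partial>P) \<le> Lc\<^sup>2 * e k + \<sigma>\<^sup>2" for k
  proof -
    define h where "h = (\<lambda>p. (norm (g (fst p) (snd p)))\<^sup>2)"
    have hm: "h \<in> borel_measurable (borel \<Otimes>\<^sub>M M)" unfolding h_def using gm2 by measurable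
    have ih: "integrable P (\<lambda>s. h (F k (restrict (\<lambda>i. \<omega> i s) {..<k}), \<omega> k s))"
      using intB[of k] unfolding B_def[abs_def] by (simp add: \<theta>F h_def)
    note R = indep_step[OF probP indep lawk Fm hm ih]
    have R2: "integrable P (\<lambda>s. \<integral>w. (norm (g (\<theta> k s) w))\<^sup>2 \<partial>M)
       \<and> (\<integral>s. B k s \<partial>P) = (\<integral>s. (\<integral>w. (norm (g (\<theta> k s) w))\<^sup>2 \<partial>M) \<partial>P)"
      using R by (simp only: \<theta>F) (simp add: B_def h_def)
    have pw: "(\<integral>w. (norm (g x w))\<^sup>2 \<partial>M) \<le> Lc\<^sup>2 * (norm (\<theta>star - x))\<^sup>2 + \<sigma>\<^sup>2" for x
    proof -
      have "(\<integral>w. (norm (g x w))\<^sup>2 \<partial>M) \<le> (norm (gradL x))\<^sup>2 + \<sigma>\<^sup>2"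
        using inner_var[OF probM, of "g x" "gradL x" "\<sigma>\<^sup>2"] g_unbiased var_bound by blast
      moreover have "norm (gradL x) \<le> Lc * norm (\<theta>star - x)"
        using grad_lip[rule_format, of x \<theta>star] G0 by (simp add: norm_minus_commute)
      then have "(norm (gradL x))\<^sup>2 \<le> (Lc * norm (\<theta>star - x))\<^sup>2"
        by (intro power_mono) auto
      ultimately show ?thesis by (simp add: power_mult_distrib)
    qed
    have "(\<integral>s. (\<integral>w. (norm (g (\<theta> k s) w))\<^sup>2 \<partial>M) \<partial>P) \<le> (\<integral>s. Lc\<^sup>2 * (norm (\<theta>star - \<theta> k s))\<^sup>2 + \<sigma>\<^sup>2 \<partial>P)"
      using R2 int_dist pw by (intro integral_mono) auto
    also have "\<dots> = Lc\<^sup>2 * e k + \<sigma>\<^sup>2"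
      using int_dist by (simp add: e_def Bochner_Integration.integral_add P.prob_space)
    finally show ?thesis using R2 by simp
  qed
  have dstep: "dd (Suc k) \<le> dd k - \<mu> / 2 * \<tau> k * e k + \<delta> * \<sigma>\<^sup>2 / 2 * (\<tau> k)\<^sup>2" for k
  proof -
    have "dd (Suc k) \<le> (\<integral>s. D k s + \<tau> k * A k s + \<delta> / 2 * (\<tau> k)\<^sup>2 * B k s \<partial>P)"
      unfolding dd_def using intD intA intB stepP by (intro integral_mono) auto
    also have "\<dots> = dd k + \<tau> k * (\<integral>s. A k s \<partial>P) + \<delta> / 2 * (\<tau> k)\<^sup>2 * (\<integral>s. B k s \<partial>P)"
      unfolding dd_def using intD intA intB by (simp add: Bochner_Integration.integral_add)
    also have "\<dots> \<le> dd k + \<tau> k * (- \<mu> * e k) + \<delta> / 2 * (\<tau> k)\<^sup>2 * (Lc\<^sup>2 * e k + \<sigma>\<^sup>2)"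
    proof -
      have "\<tau> k * (\<integral>s. A k s \<partial>P) \<le> \<tau> k * (- \<mu> * e k)"
        using EA t0 by (intro mult_left_mono) auto
      moreover have "\<delta> / 2 * (\<tau> k)\<^sup>2 * (\<integral>s. B k s \<partial>P) \<le> \<delta> / 2 * (\<tau> k)\<^sup>2 * (Lc\<^sup>2 * e k + \<sigma>\<^sup>2)"
        using EB \<delta>_pos by (intro mult_left_mono) auto
      ultimately show ?thesis by linarith
    qed
    also have "\<dots> \<le> dd k - \<mu> / 2 * \<tau> k * e k + \<delta> * \<sigma>\<^sup>2 / 2 * (\<tau> k)\<^sup>2"
    proof -
      have e0: "e k \<ge> 0" unfolding e_def by (rule Bochner_Integration.integral_nonneg) auto
      have "\<tau> k * (2 * \<delta> * Lc\<^sup>2) \<le> \<mu>"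
        using \<tau>_small[rule_format, of k] \<delta>_pos Lc_pos by (simp add: field_simps)
      then have "\<delta> * \<tau> k * Lc\<^sup>2 \<le> \<mu> / 2" by (simp add: algebra_simps)
      then have "(\<tau> k * e k / 2) * (\<delta> * \<tau> k * Lc\<^sup>2) \<le> (\<tau> k * e k / 2) * (\<mu> / 2)"
        using t0[of k] e0 by (intro mult_left_mono) auto
      moreover have "(\<tau> k * e k / 2) * (\<mu> / 2) \<le> \<mu> / 2 * \<tau> k * e k"
        using t0[of k] e0 \<mu>_pos by (simp add: field_simps)
      ultimately have "\<delta> / 2 * (\<tau> k)\<^sup>2 * (Lc\<^sup>2 * e k) \<le> \<mu> / 2 * \<tau> k * e k"
        by (simp add: power2_eq_square algebra_simps)
      then show ?thesis by (simp add: algebra_simps)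
    qed
    finally show ?thesis .
  qed
  define C where "C = Cst \<theta>star + 1 / (2 * \<delta>)"
  have Cpos: "C > 0"
  proof -
    have "1 / (2 * \<delta>) > 0" using \<delta>_pos by simp
    then show ?thesis using Cst_nonneg[of \<theta>star] unfolding C_def by linarith
  qed
  have Dlow: "D k s \<ge> (norm (\<theta>star - \<theta> k s))\<^sup>2 / (2 * \<delta>)" for k s
    unfolding D_def by (rule breg_bounds(1)[OF \<delta>_pos sgk])
  have Dup: "D k s \<le> C * (norm (\<theta>star - \<theta> k s))\<^sup>2" for k s
    unfolding D_def C_def by (rule breg_bounds(2)[OF \<delta>_pos sgk])
  have e0: "e k \<ge> 0" for k unfolding e_def by (rule Bochner_Integration.integral_nonneg) auto
  have dd0: "dd k \<ge> 0" for k
    unfolding dd_def using Dlow \<delta>_pos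
    by (intro Bochner_Integration.integral_nonneg) (smt (verit) divide_nonneg_pos zero_le_power2)
  have ddC: "dd k \<le> C * e k" for k
  proof -
    have "dd k \<le> (\<integral>s. C * (norm (\<theta>star - \<theta> k s))\<^sup>2 \<partial>P)"
      unfolding dd_def using intD int_dist Dup by (intro integral_mono) auto
    then show ?thesis by (simp add: e_def)
  qed
  have ed: "e k \<le> 2 * \<delta> * dd k" for k
  proof -
    have "e k / (2 * \<delta>) = (\<integral>s. (norm (\<theta>star - \<theta> k s))\<^sup>2 / (2 * \<delta>) \<partial>P)"
      by (simp add: e_def)
    also have "\<dots> \<le> dd k"
      unfolding dd_def using intD int_dist Dlow by (intro integral_mono) auto
    finally show ?thesis using \<delta>_pos by (simp add: field_simps)
  qed
  have lim1: "dd \<longlonglongrightarrow> 0"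
  proof (rule seq_lemma[where a = "\<mu> / 2" and c = "\<delta> * \<sigma>\<^sup>2 / 2" and C = C and e = e and \<tau> = \<tau>])
    show "\<And>k. dd (Suc k) \<le> dd k - \<mu> / 2 * \<tau> k * e k + \<delta> * \<sigma>\<^sup>2 / 2 * (\<tau> k)\<^sup>2" by (rule dstep)
    show "\<And>k. 0 \<le> dd k" by (rule dd0)
    show "\<And>k. 0 \<le> e k" by (rule e0)
    show "\<And>k. 0 \<le> \<tau> k" by (rule t0)
    show "0 < \<mu> / 2" using \<mu>_pos by simp
    show "0 < C" by (rule Cpos)
    show "0 \<le> \<delta> * \<sigma>\<^sup>2 / 2" using \<delta>_pos by simp
    show "\<And>k. dd k \<le> C * e k" by (rule ddC)
    show "summable (\<lambda>k. (\<tau> k)\<^sup>2)" by (rule \<tau>_sq_sum)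
    show "filterlim (\<lambda>n. \<Sum>k<n. \<tau> k) at_top sequentially" by (rule \<tau>_sum)
  qed
  have lim2: "e \<longlonglongrightarrow> 0"
  proof (rule tendsto_sandwich[of "\<lambda>_. 0" e sequentially "\<lambda>k. 2 * \<delta> * dd k"])
    show "(\<lambda>k. 2 * \<delta> * dd k) \<longlonglongrightarrow> 0"
      using tendsto_mult[OF tendsto_const lim1, of "2 * \<delta>"] by simp
    show "\<forall>\<^sub>F n in sequentially. 0 \<le> e n" using e0 by simp
    show "\<forall>\<^sub>F n in sequentially. e n \<le> 2 * \<delta> * dd n" using ed by simp
  qed simp
  show ?thesis using lim1 lim2 unfolding dd_def D_def e_def by simp
qed

end
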